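(* For every integer $n\ge 0$ and every complex number $x$, \[ \sum_{j=0}^{n}(-1)^jL_{n-2j}(x)=\sum_{j=0}^{n}\left(\frac{x}{2}\right)^jL_{n-j}(x)=2F_{n+1}(x). \] In particular, with Pell numbers $P_n=F_n(2)$ and Pell–Lucas numbers $Q_n=L_n(2)$, $\sum_{j=0}^n(-1)^jQ_{n-2j}=\sum_{j=0}^nQ_{n-j}=2P_{n+1}$.
   Context: The Fibonacci polynomials $F_n(x)$ and Lucas polynomials $L_n(x)$ are defined by $F_0(x)=0$, $F_1(x)=1$, $L_0(x)=2$, $L_1(x)=x$ and $G_{n+1}(x)=xG_n(x)+G_{n-1}(x)$; they are extended to negative indices by $F_{-n}(x)=(-1)^{n-1}F_n(x)$ and $L_{-n}(x)=(-1)^nL_n(x)$ (equivalently, by the Binet forms $F_n(x)=(\alpha(x)^n-\beta(x)^n)/(\alpha(x)-\beta(x))$, $L_n(x)=\alpha(x)^n+\beta(x)^n$ with $\alpha(x),\beta(x)=(x\pm\sqrt{x^2+4})/2$). *)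

theory Defs
  imports Complex_Main
begin

fun fibp_nat :: "complex \<Rightarrow> nat \<Rightarrow> complex" where
  "fibp_nat x 0 = 0"
| "fibp_nat x (Suc 0) = 1"
| "fibp_nat x (Suc (Suc n)) = x * fibp_nat x (Suc n) + fibp_nat x n"

fun lucp_nat :: "complex \<Rightarrow> nat \<Rightarrow> complex" where
  "lucp_nat x 0 = 2"
| "lucp_nat x (Suc 0) = x"
| "lucp_nat x (Suc (Suc n)) = x * lucp_nat x (Suc n) + lucp_nat x n"

definition fibp :: "complex \<Rightarrow> int \<Rightarrow> complex" where
  "fibp x k = (if k \<ge> 0 then fibp_nat x (nat k)
               else (-1) ^ (nat (-k) - 1) * fibp_nat x (nat (-k)))"

definition lucp :: "complex \<Rightarrow> int \<Rightarrow> complex" where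
  "lucp x k = (if k \<ge> 0 then lucp_nat x (nat k)
               else (-1) ^ nat (-k) * lucp_nat x (nat (-k)))"

end

theory Submission
  imports Defs
begin

lemma fl_a: "lucp_nat x n + x * fibp_nat x n = 2 * fibp_nat x (Suc n)
   \<and> lucp_nat x (Suc n) + x * fibp_nat x (Suc n) = 2 * fibp_nat x (Suc (Suc n))"
  by (induction n) (auto simp: algebra_simps)

lemma fl_b0: "lucp_nat x (Suc n) = fibp_nat x (Suc (Suc n)) + fibp_nat x n"
proof (induction n rule: nat_less_induct)
  case (1 n)
  show ?case
  proof (cases n)
    case 0 then show ?thesis by simp
  next
    case (Suc m) note m = Suc
    show ?thesis
    proof (cases m)
      case 0 then show ?thesis using m by simp
    next
      case (Suc k)
      have lt: "k < n" "Suc k < n" using m Suc by auto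
      have a: "lucp_nat x (Suc k) = fibp_nat x (Suc (Suc k)) + fibp_nat x k" using 1 lt by blast
      have b: "lucp_nat x (Suc (Suc k)) = fibp_nat x (Suc (Suc (Suc k))) + fibp_nat x (Suc k)" using 1 lt by blast
      have "lucp_nat x (Suc (Suc (Suc k))) = x * lucp_nat x (Suc (Suc k)) + lucp_nat x (Suc k)" by simp
      also have "\<dots> = x * (fibp_nat x (Suc (Suc (Suc k))) + fibp_nat x (Suc k)) + (fibp_nat x (Suc (Suc k)) + fibp_nat x k)"
        using a b by simp
      also have "\<dots> = fibp_nat x (Suc (Suc (Suc (Suc k)))) + fibp_nat x (Suc (Suc k))"
        by (simp add: algebra_simps)
      finally show ?thesis using m Suc by simp
    qed
  qed
qed

lemma fl_b: "lucp_nat x (Suc n) = fibp_nat x (Suc (Suc n)) + fibp_nat x n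
   \<and> lucp_nat x (Suc (Suc n)) = fibp_nat x (Suc (Suc (Suc n))) + fibp_nat x (Suc n)"
  using fl_b0 by blast

lemma S_eq: "(\<Sum>j\<le>n. (x / 2) ^ j * lucp x (int n - int j)) = 2 * fibp x (int n + 1)"
proof (induction n)
  case 0 then show ?case by (simp add: lucp_def fibp_def)
next
  case (Suc n)
  have "(\<Sum>j\<le>Suc n. (x / 2) ^ j * lucp x (int (Suc n) - int j))
     = lucp x (int (Suc n)) + (\<Sum>j\<le>n. (x / 2) ^ Suc j * lucp x (int (Suc n) - int (Suc j)))"
    by (subst sum.atMost_Suc_shift) simp
  also have "(\<Sum>j\<le>n. (x / 2) ^ Suc j * lucp x (int (Suc n) - int (Suc j)))
     = (x/2) * (\<Sum>j\<le>n. (x / 2) ^ j * lucp x (int n - int j))"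
    by (simp add: sum_distrib_left mult.assoc)
  also have "\<dots> = x * fibp_nat x (Suc n)" using Suc by (simp add: fibp_def nat_add_distrib)
  finally show ?case using fl_a[of x "Suc n"]
    by (simp add: lucp_def fibp_def nat_add_distrib algebra_simps)
qed

lemma T_eq: "(\<Sum>j\<le>n. (-1) ^ j * lucp x (int n - 2 * int j)) = 2 * fibp x (int n + 1)"
proof (induction n rule: nat_less_induct)
  case (1 n)
  show ?case
  proof (cases n)
    case 0 then show ?thesis by (simp add: lucp_def fibp_def)
  next
    case (Suc m) note m = Suc
    show ?thesis
    proof (cases m)
      case 0 then show ?thesis using m by (simp add: lucp_def fibp_def numeral_2_eq_2)
    next
      case (Suc k)
      have n: "n = Suc (Suc k)" using m Suc by simp
      have IH: "(\<Sum>j\<le>k. (-1) ^ j * lucp x (int k - 2 * int j)) = 2 * fibp x (int k + 1)"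
        using 1 n by auto
      have "(\<Sum>j\<le>Suc (Suc k). (-1) ^ j * lucp x (int (Suc (Suc k)) - 2 * int j))
        = lucp x (int (Suc (Suc k))) + ((\<Sum>j\<le>k. (-1) ^ Suc j * lucp x (int (Suc (Suc k)) - 2 * int (Suc j)))
           + (-1) ^ Suc (Suc k) * lucp x (int (Suc (Suc k)) - 2 * int (Suc (Suc k))))"
        by (subst sum.atMost_Suc_shift) (simp only: sum.atMost_Suc add.assoc, simp)
      also have "(\<Sum>j\<le>k. (-1) ^ Suc j * lucp x (int (Suc (Suc k)) - 2 * int (Suc j)))
         = - (\<Sum>j\<le>k. (-1) ^ j * lucp x (int k - 2 * int j))"
        by (simp add: sum_negf[symmetric])
      also have "(-1) ^ Suc (Suc k) * lucp x (int (Suc (Suc k)) - 2 * int (Suc (Suc k)))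
         = lucp_nat x (Suc (Suc k))"
      proof -
        have e: "int (Suc (Suc k)) - 2 * int (Suc (Suc k)) = - int (Suc (Suc k))" by simp
        have e2: "nat (int k + 2) = Suc (Suc k)" by simp
        have e3: "((-1::complex) ^ k * (- 1) ^ k) = 1"
          by (simp add: power_add[symmetric])
        show ?thesis unfolding e lucp_def by (simp add: e2 mult.assoc[symmetric] e3)
      qed
      finally have eq: "(\<Sum>j\<le>Suc (Suc k). (-1) ^ j * lucp x (int (Suc (Suc k)) - 2 * int j))
         = lucp x (int (Suc (Suc k))) + (- (2 * fibp x (int k + 1)) + lucp_nat x (Suc (Suc k)))"
        unfolding IH .
      have f1: "fibp x (int k + 1) = fibp_nat x (Suc k)" by (simp add: fibp_def nat_add_distrib)
      have f2: "fibp x (int (Suc (Suc k)) + 1) = fibp_nat x (Suc (Suc (Suc k)))"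
      proof -
        have "int (Suc (Suc k)) + 1 = int (Suc (Suc (Suc k)))" by simp
        then show ?thesis unfolding fibp_def by (simp only: nat_int of_nat_0_le_iff if_True)
      qed
      have l2: "lucp x (int (Suc (Suc k))) = lucp_nat x (Suc (Suc k))" unfolding lucp_def by (simp only: nat_int of_nat_0_le_iff if_True)
      show ?thesis unfolding n eq f1 f2 l2 using fl_b[of x k]
        by (simp del: lucp_nat.simps fibp_nat.simps add: algebra_simps)
    qed
  qed
qed

theorem theorem9:
  fixes n :: nat and x :: complex
  shows "(\<Sum>j=0..n. (-1) ^ j * lucp x (int n - 2 * int j))
           = (\<Sum>j=0..n. (x / 2) ^ j * lucp x (int n - int j))
       \<and> (\<Sum>j=0..n. (x / 2) ^ j * lucp x (int n - int j)) = 2 * fibp x (int n + 1)"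
  using S_eq[of x n] T_eq[where n=n and x=x] by (simp add: atLeast0AtMost)

end
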